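(* Let $\alpha,\beta,\gamma\in\mathbb{Z}_2^n$, $p=(p_0,p_1,p_2)\in\mathbb{Z}_2^3$ and $a,b,c\in\mathbb{Z}_2$. If $\mathrm{wt}(p)$ is even, then $$\mathrm{cadp}_c(\alpha p_0,\beta p_1,\gamma p_2)=\frac{1}{2^{\mathrm{wt}(p)}}\sum_{q\in\mathbb{Z}_2^3,\ q\preceq p}\mathrm{cadp}_{c\oplus q_2}(\alpha^{[q_0]},\beta^{[q_1]},\gamma^{[q_2]}),$$ $$\mathrm{padp}_{a,b}(\alpha p_0,\beta p_1,\gamma p_2)=\frac{1}{2^{\mathrm{wt}(p)}}\sum_{q\in\mathbb{Z}_2^3,\ q\preceq p}\mathrm{padp}_{a\oplus q_0,b\oplus q_1}(\alpha^{[q_0]},\beta^{[q_1]},\gamma^{[q_2]}).$$ If $\mathrm{wt}(p)$ is odd, then $\mathrm{cadp}_c(\alpha p_0,\beta p_1,\gamma p_2)=\mathrm{padp}_{a,b}(\alpha p_0,\beta p_1,\gamma p_2)=0$.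
   Context: For $x\in\mathbb{Z}_2^n$ and a bit $t$, $xt=(x_0,\dots,x_{n-1},t)\in\mathbb{Z}_2^{n+1}$. $\overline{x}$ is the bitwise complement and $x^{[a]}=x$ if $a=0$, $\overline{x}$ if $a=1$. $\mathrm{wt}$ is Hamming weight and $q\preceq p$ means $q_i\le p_i$ for all $i$. Indices $0,\dots,7$ are identified with $\mathbb{Z}_2^3$ via $(p_0,p_1,p_2)\leftrightarrow4p_0+2p_1+p_2$; $e_0,\dots,e_7$ are the standard basis row vectors of $\mathbb{Q}^8$. $A_0$ is $\frac14$ times the $8\times8$ matrix with rows $(4,0,0,1,0,1,1,0)$, $(0,0,0,1,0,1,0,0)$, $(0,0,0,1,0,0,1,0)$, $(0,0,0,1,0,0,0,0)$, $(0,0,0,0,0,1,1,0)$, $(0,0,0,0,0,1,0,0)$, $(0,0,0,0,0,0,1,0)$, $(0,\dots,0)$, and $(A_k)_{i,j}=(A_0)_{i\oplus k,j\oplus k}$. For $\alpha,\beta,\gamma\in\mathbb{Z}_2^m$ let $\omega_i=4\alpha_i+2\beta_i+\gamma_i$. With $L_0=(1,0,1,0,1,0,1,0)$, $L_1=(0,1,0,1,0,1,0,1)$, $L_{0,0}=(1,1,0,0,0,0,0,0)$, $L_{0,1}=(0,0,1,1,0,0,0,0)$, $L_{1,0}=(0,0,0,0,1,1,0,0)$, $L_{1,1}=(0,0,0,0,0,0,1,1)$, define $\mathrm{cadp}_c(\alpha,\beta,\gamma)=L_cA_{\omega_0}\cdots A_{\omega_{m-1}}e_0^T$ and $\mathrm{padp}_{a,b}(\alpha,\beta,\gamma)=L_{a,b}A_{\omega_0}\cdots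 A_{\omega_{m-1}}e_0^T$. *)

theory Defs
  imports Complex_Main
begin

text \<open>Bits are booleans; vectors in Z_2^m are bool lists of length m (entry i = x_i).
  Indices 0..7 encode (p0,p1,p2) as 4 p0 + 2 p1 + p2.\<close>

definition A0_rows :: "nat list list" where
  "A0_rows = [[4,0,0,1,0,1,1,0],
              [0,0,0,1,0,1,0,0],
              [0,0,0,1,0,0,1,0],
              [0,0,0,1,0,0,0,0],
              [0,0,0,0,0,1,1,0],
              [0,0,0,0,0,1,0,0],
              [0,0,0,0,0,0,1,0],
              [0,0,0,0,0,0,0,0]]"

definition A0 :: "nat \<Rightarrow> nat \<Rightarrow> real" where
  "A0 i j = real (A0_rows ! i ! j) / 4"

definition Amat :: "nat \<Rightarrow> nat \<Rightarrow> nat \<Rightarrow> real" where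
  "Amat k i j = A0 (Bit_Operations.xor i k) (Bit_Operations.xor j k)"

text \<open>prodvec [w0,...,w(m-1)] = A_{w0} ... A_{w(m-1)} e_0^T as a column vector on {0..<8}.\<close>
fun prodvec :: "nat list \<Rightarrow> nat \<Rightarrow> real" where
  "prodvec [] = (\<lambda>j. if j = 0 then 1 else 0)"
| "prodvec (w # ws) = (\<lambda>i. \<Sum>j<8. Amat w i j * prodvec ws j)"

definition omegas :: "bool list \<Rightarrow> bool list \<Rightarrow> bool list \<Rightarrow> nat list" where
  "omegas \<alpha> \<beta> \<gamma> = map (\<lambda>(x, y, z). 4 * of_bool x + 2 * of_bool y + of_bool z) (zip \<alpha> (zip \<beta> \<gamma>))"

definition Lc :: "bool \<Rightarrow> nat \<Rightarrow> real" where
  "Lc c i = (if c then of_bool (odd i) else of_bool (even i))"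

definition Lab :: "bool \<Rightarrow> bool \<Rightarrow> nat \<Rightarrow> real" where
  "Lab a b i = of_bool (i div 2 = 2 * of_bool a + of_bool b)"

definition cadp :: "bool \<Rightarrow> bool list \<Rightarrow> bool list \<Rightarrow> bool list \<Rightarrow> real" where
  "cadp c \<alpha> \<beta> \<gamma> = (\<Sum>i<8. Lc c i * prodvec (omegas \<alpha> \<beta> \<gamma>) i)"

definition padp :: "bool \<Rightarrow> bool \<Rightarrow> bool list \<Rightarrow> bool list \<Rightarrow> bool list \<Rightarrow> real" where
  "padp a b \<alpha> \<beta> \<gamma> = (\<Sum>i<8. Lab a b i * prodvec (omegas \<alpha> \<beta> \<gamma>) i)"

definition bcomp :: "bool \<Rightarrow> bool list \<Rightarrow> bool list" where
  "bcomp a x = (if a then map Not x else x)"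

definition wt3 :: "bool \<times> bool \<times> bool \<Rightarrow> nat" where
  "wt3 p = (case p of (p0, p1, p2) \<Rightarrow> of_bool p0 + of_bool p1 + of_bool p2)"

definition below3 :: "bool \<times> bool \<times> bool \<Rightarrow> (bool \<times> bool \<times> bool) set" where
  "below3 p = {(q0, q1, q2). (q0 \<longrightarrow> fst p) \<and> (q1 \<longrightarrow> fst (snd p)) \<and> (q2 \<longrightarrow> snd (snd p))}"

end

theory Submission imports Defs begin

lemma lt8: "(x::nat) < 8 \<Longrightarrow> x=0\<or>x=1\<or>x=2\<or>x=3\<or>x=4\<or>x=5\<or>x=6\<or>x=7" by auto
lemma xor_lt8: "x<8 \<Longrightarrow> q<(8::nat) \<Longrightarrow> Bit_Operations.xor x q < 8"
  apply (drule lt8)+ by (elim disjE; simp)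
lemma xor_inv: "Bit_Operations.xor (Bit_Operations.xor (i::nat) q) q = i"
  by (simp add: xor.assoc)
lemma xor_eq0: "Bit_Operations.xor (i::nat) q = 0 \<longleftrightarrow> i = q"
  by (metis xor_inv xor.left_neutral xor_self_eq)

fun G :: "nat list \<Rightarrow> nat \<Rightarrow> nat \<Rightarrow> real" where
  "G [] q i = of_bool (i = q)"
| "G (w # ws) q i = (\<Sum>j<8. Amat w i j * G ws q j)"

lemma delta1: "(i::nat) < 8 \<Longrightarrow> (\<Sum>q<8. Amat w q 0 * of_bool (i = q)) = Amat w i 0"
proof -
  assume "i < 8"
  have "(\<Sum>q<8. Amat w q 0 * of_bool (i = q)) = (\<Sum>q<8. if q = i then Amat w q 0 else 0)"
    by (rule sum.cong) auto
  then show ?thesis using \<open>i<8\<close> by simp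
qed
lemma delta2: "(\<Sum>j<(8::nat). Amat w i j * (if j = 0 then 1 else 0)) = Amat w i 0"
proof -
  have "(\<Sum>j<(8::nat). Amat w i j * (if j = 0 then 1 else 0)) = (\<Sum>j<8. if j = 0 then Amat w i j else 0)"
    by (rule sum.cong) auto
  then show ?thesis by simp
qed

lemma L1: "i < 8 \<Longrightarrow> prodvec (ws @ [w]) i = (\<Sum>q<8. Amat w q 0 * G ws q i)"
proof (induction ws arbitrary: i)
  case Nil
  have "prodvec ([] @ [w]) i = (\<Sum>j<(8::nat). Amat w i j * (if j = 0 then 1 else 0))" by simp
  also have "\<dots> = Amat w i 0" by (rule delta2)
  also have "\<dots> = (\<Sum>q<8. Amat w q 0 * of_bool (i = q))" using Nil by (rule delta1[symmetric])
  also have "\<dots> = (\<Sum>q<8. Amat w q 0 * G [] q i)" by simp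
  finally show ?case .
next
  case (Cons v ws)
  have "prodvec ((v # ws) @ [w]) i = (\<Sum>j<8. Amat v i j * (\<Sum>q<8. Amat w q 0 * G ws q j))"
    using Cons.IH by simp
  also have "\<dots> = (\<Sum>j<8. \<Sum>q<8. Amat v i j * (Amat w q 0 * G ws q j))"
    by (simp add: sum_distrib_left)
  also have "\<dots> = (\<Sum>q<8. \<Sum>j<8. Amat v i j * (Amat w q 0 * G ws q j))"
    by (rule sum.swap)
  also have "\<dots> = (\<Sum>q<8. Amat w q 0 * (\<Sum>j<8. Amat v i j * G ws q j))"
    by (simp add: sum_distrib_left mult.left_commute)
  finally show ?case by simp
qed

lemma xor_cancel: "Bit_Operations.xor (q::nat) (Bit_Operations.xor w q) = w"
proof -
  have "Bit_Operations.xor q (Bit_Operations.xor w q) = Bit_Operations.xor (Bit_Operations.xor w q) q"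
    by (rule xor.commute)
  also have "\<dots> = w" by (rule xor_inv)
  finally show ?thesis .
qed

lemma Amat_shift: "Amat w i (Bit_Operations.xor j q) = Amat (Bit_Operations.xor w q) (Bit_Operations.xor i q) j"
proof -
  have 1: "Bit_Operations.xor (Bit_Operations.xor i q) (Bit_Operations.xor w q) = Bit_Operations.xor i (w::nat)"
    by (simp only: xor.assoc xor_cancel)
  have 2: "Bit_Operations.xor (Bit_Operations.xor j q) w = Bit_Operations.xor j (Bit_Operations.xor (w::nat) q)"
    by (metis xor.assoc xor.commute)
  show ?thesis unfolding Amat_def 1 2 ..
qed

lemma L2: "q < 8 \<Longrightarrow> G ws q i = prodvec (map (\<lambda>w. Bit_Operations.xor w q) ws) (Bit_Operations.xor i q)"
proof (induction ws arbitrary: i)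
  case Nil
  then show ?case by (simp add: xor_eq0)
next
  case (Cons w ws)
  let ?P = "prodvec (map (\<lambda>w. Bit_Operations.xor w q) ws)"
  have "G (w # ws) q i = (\<Sum>j<8. Amat w i j * ?P (Bit_Operations.xor j q))"
    using Cons by simp
  also have "\<dots> = (\<Sum>j<8. Amat w i (Bit_Operations.xor j q) * ?P j)"
    apply (rule sum.reindex_bij_witness[where i="\<lambda>j. Bit_Operations.xor j q" and j="\<lambda>j. Bit_Operations.xor j q"])
    using Cons.prems by (auto simp: xor_inv xor_lt8)
  also have "\<dots> = (\<Sum>j<8. Amat (Bit_Operations.xor w q) (Bit_Operations.xor i q) j * ?P j)"
    by (simp add: Amat_shift)
  finally show ?case by simp
qed

lemma omegas_snoc: "length \<alpha> = length \<beta> \<Longrightarrow> length \<beta> = length \<gamma> \<Longrightarrow>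
  omegas (\<alpha>@[x]) (\<beta>@[y]) (\<gamma>@[z]) = omegas \<alpha> \<beta> \<gamma> @ [4 * of_bool x + 2 * of_bool y + of_bool z]"
  by (simp add: omegas_def)
lemma xor_bits: "Bit_Operations.xor (4 * of_bool x + 2 * of_bool y + of_bool z) (4 * of_bool a + 2 * of_bool b + of_bool c)
   = (4 * of_bool (x\<noteq>a) + 2 * of_bool (y\<noteq>b) + of_bool (z\<noteq>c) :: nat)"
  by (cases x; cases y; cases z; cases a; cases b; cases c; simp add: numeral_3_eq_3[symmetric] numeral_2_eq_2[symmetric])
lemma omegas_bcomp: "omegas (bcomp a \<alpha>) (bcomp b \<beta>) (bcomp c \<gamma>) =
   map (\<lambda>v. Bit_Operations.xor v (4 * of_bool a + 2 * of_bool b + of_bool c)) (omegas \<alpha> \<beta> \<gamma>)"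
  unfolding omegas_def bcomp_def
  by (cases a; cases b; cases c; simp add: zip_map1 zip_map2 xor_bits[of _ _ _ False False False, simplified]
     xor_bits[of _ _ _ True False False, simplified]  xor_bits[of _ _ _ False True False, simplified]
     xor_bits[of _ _ _ False False True, simplified] xor_bits[of _ _ _ True True False, simplified]
     xor_bits[of _ _ _ True False True, simplified] xor_bits[of _ _ _ False True True, simplified]
     xor_bits[of _ _ _ True True True, simplified] split_def)
lemma below3_eq: "below3 (p0,p1,p2) = (if p0 then UNIV else {False}) \<times> (if p1 then UNIV else {False}) \<times> (if p2 then UNIV else {False})"
  unfolding below3_def by auto

definition S3 :: "bool \<Rightarrow> bool set" where "S3 p = (if p then {False, True} else {False})"
lemma sum_below3: "(\<Sum>(q0,q1,q2)\<in>below3 (p0,p1,p2). f q0 q1 q2) = (\<Sum>q0\<in>S3 p0. \<Sum>q1\<in>S3 p1. \<Sum>q2\<in>S3 p2. f q0 q1 q2)"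
proof -
  have "below3 (p0,p1,p2) = S3 p0 \<times> S3 p1 \<times> S3 p2" unfolding below3_eq S3_def by auto
  then show ?thesis by (simp add: sum.cartesian_product split_def)
qed

lemma lessThan8: "{..<8::nat} = {0,1,2,3,4,5,6,7}" by auto

lemma coln0: fixes F :: "nat \<Rightarrow> real" shows "(\<Sum>q<8. Amat 0 q 0 * F q) = F 0"
  by (simp add: lessThan8 Amat_def A0_def A0_rows_def)
lemma wv0: "(4 * of_bool False + 2 * of_bool False + of_bool False) = (0::nat)" by simp
lemma col0: fixes F :: "nat \<Rightarrow> real" shows "(\<Sum>q<8. Amat (4 * of_bool False + 2 * of_bool False + of_bool False) q 0 * F q) = F 0"
  unfolding wv0 by (rule coln0)
lemma coln1: fixes F :: "nat \<Rightarrow> real" shows "(\<Sum>q<8. Amat 1 q 0 * F q) = 0"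
  by (simp add: lessThan8 Amat_def A0_def A0_rows_def)
lemma wv1: "(4 * of_bool False + 2 * of_bool False + of_bool True) = (1::nat)" by simp
lemma col1: fixes F :: "nat \<Rightarrow> real" shows "(\<Sum>q<8. Amat (4 * of_bool False + 2 * of_bool False + of_bool True) q 0 * F q) = 0"
  unfolding wv1 by (rule coln1)
lemma coln2: fixes F :: "nat \<Rightarrow> real" shows "(\<Sum>q<8. Amat 2 q 0 * F q) = 0"
  by (simp add: lessThan8 Amat_def A0_def A0_rows_def)
lemma wv2: "(4 * of_bool False + 2 * of_bool True + of_bool False) = (2::nat)" by simp
lemma col2: fixes F :: "nat \<Rightarrow> real" shows "(\<Sum>q<8. Amat (4 * of_bool False + 2 * of_bool True + of_bool False) q 0 * F q) = 0"
  unfolding wv2 by (rule coln2)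
lemma coln3: fixes F :: "nat \<Rightarrow> real" shows "(\<Sum>q<8. Amat 3 q 0 * F q) = (F 0 + F 1 + F 2 + F 3) / 4"
  by (simp add: lessThan8 Amat_def A0_def A0_rows_def)
lemma wv3: "(4 * of_bool False + 2 * of_bool True + of_bool True) = (3::nat)" by simp
lemma col3: fixes F :: "nat \<Rightarrow> real" shows "(\<Sum>q<8. Amat (4 * of_bool False + 2 * of_bool True + of_bool True) q 0 * F q) = (F 0 + F 1 + F 2 + F 3) / 4"
  unfolding wv3 by (rule coln3)
lemma coln4: fixes F :: "nat \<Rightarrow> real" shows "(\<Sum>q<8. Amat 4 q 0 * F q) = 0"
  by (simp add: lessThan8 Amat_def A0_def A0_rows_def)
lemma wv4: "(4 * of_bool True + 2 * of_bool False + of_bool False) = (4::nat)" by simp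
lemma col4: fixes F :: "nat \<Rightarrow> real" shows "(\<Sum>q<8. Amat (4 * of_bool True + 2 * of_bool False + of_bool False) q 0 * F q) = 0"
  unfolding wv4 by (rule coln4)
lemma coln5: fixes F :: "nat \<Rightarrow> real" shows "(\<Sum>q<8. Amat 5 q 0 * F q) = (F 0 + F 1 + F 4 + F 5) / 4"
  by (simp add: lessThan8 Amat_def A0_def A0_rows_def)
lemma wv5: "(4 * of_bool True + 2 * of_bool False + of_bool True) = (5::nat)" by simp
lemma col5: fixes F :: "nat \<Rightarrow> real" shows "(\<Sum>q<8. Amat (4 * of_bool True + 2 * of_bool False + of_bool True) q 0 * F q) = (F 0 + F 1 + F 4 + F 5) / 4"
  unfolding wv5 by (rule coln5)
lemma coln6: fixes F :: "nat \<Rightarrow> real" shows "(\<Sum>q<8. Amat 6 q 0 * F q) = (F 0 + F 2 + F 4 + F 6) / 4"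
  by (simp add: lessThan8 Amat_def A0_def A0_rows_def)
lemma wv6: "(4 * of_bool True + 2 * of_bool True + of_bool False) = (6::nat)" by simp
lemma col6: fixes F :: "nat \<Rightarrow> real" shows "(\<Sum>q<8. Amat (4 * of_bool True + 2 * of_bool True + of_bool False) q 0 * F q) = (F 0 + F 2 + F 4 + F 6) / 4"
  unfolding wv6 by (rule coln6)
lemma coln7: fixes F :: "nat \<Rightarrow> real" shows "(\<Sum>q<8. Amat 7 q 0 * F q) = 0"
  by (simp add: lessThan8 Amat_def A0_def A0_rows_def)
lemma wv7: "(4 * of_bool True + 2 * of_bool True + of_bool True) = (7::nat)" by simp
lemma col7: fixes F :: "nat \<Rightarrow> real" shows "(\<Sum>q<8. Amat (4 * of_bool True + 2 * of_bool True + of_bool True) q 0 * F q) = 0"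
  unfolding wv7 by (rule coln7)

theorem theorem3:
  fixes \<alpha> \<beta> \<gamma> :: "bool list" and n :: nat and p0 p1 p2 a b c :: bool
  assumes "length \<alpha> = n" and "length \<beta> = n" and "length \<gamma> = n"
  shows "(even (wt3 (p0, p1, p2)) \<longrightarrow>
            cadp c (\<alpha> @ [p0]) (\<beta> @ [p1]) (\<gamma> @ [p2]) =
              1 / 2 ^ wt3 (p0, p1, p2) *
              (\<Sum>(q0, q1, q2)\<in>below3 (p0, p1, p2).
                  cadp (c \<noteq> q2) (bcomp q0 \<alpha>) (bcomp q1 \<beta>) (bcomp q2 \<gamma>))
          \<and> padp a b (\<alpha> @ [p0]) (\<beta> @ [p1]) (\<gamma> @ [p2]) =
              1 / 2 ^ wt3 (p0, p1, p2) *
              (\<Sum>(q0, q1, q2)\<in>below3 (p0, p1, p2).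
                  padp (a \<noteq> q0) (b \<noteq> q1) (bcomp q0 \<alpha>) (bcomp q1 \<beta>) (bcomp q2 \<gamma>)))
        \<and> (odd (wt3 (p0, p1, p2)) \<longrightarrow>
            cadp c (\<alpha> @ [p0]) (\<beta> @ [p1]) (\<gamma> @ [p2]) = 0
          \<and> padp a b (\<alpha> @ [p0]) (\<beta> @ [p1]) (\<gamma> @ [p2]) = 0)"
proof -
  define ws where "ws = omegas \<alpha> \<beta> \<gamma>"
  define w :: nat where "w = 4 * of_bool p0 + 2 * of_bool p1 + of_bool p2"
  define P where "P q = prodvec (map (\<lambda>v. Bit_Operations.xor v q) ws)" for q
  have snoc: "omegas (\<alpha> @ [p0]) (\<beta> @ [p1]) (\<gamma> @ [p2]) = ws @ [w]"
    unfolding ws_def w_def using assms by (simp add: omegas_snoc)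
  have pv: "prodvec (ws @ [w]) i = (\<Sum>q<8. Amat w q 0 * P q (Bit_Operations.xor i q))" if "i < 8" for i
    using that by (simp add: L1 L2 P_def)
  have C: "cadp c' (\<alpha> @ [p0]) (\<beta> @ [p1]) (\<gamma> @ [p2]) =
     (\<Sum>i<8. Lc c' i * (\<Sum>q<8. Amat w q 0 * P q (Bit_Operations.xor i q)))" for c'
    unfolding cadp_def snoc by (rule sum.cong) (auto simp: pv)
  have Pa: "padp a' b' (\<alpha> @ [p0]) (\<beta> @ [p1]) (\<gamma> @ [p2]) =
     (\<Sum>i<8. Lab a' b' i * (\<Sum>q<8. Amat w q 0 * P q (Bit_Operations.xor i q)))" for a' b'
    unfolding padp_def snoc by (rule sum.cong) (auto simp: pv)
  have CB: "cadp c' (bcomp q0 \<alpha>) (bcomp q1 \<beta>) (bcomp q2 \<gamma>) =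
     (\<Sum>i<8. Lc c' i * P (4 * of_bool q0 + 2 * of_bool q1 + of_bool q2) i)" for c' q0 q1 q2
    unfolding cadp_def omegas_bcomp P_def ws_def ..
  have PB: "padp a' b' (bcomp q0 \<alpha>) (bcomp q1 \<beta>) (bcomp q2 \<gamma>) =
     (\<Sum>i<8. Lab a' b' i * P (4 * of_bool q0 + 2 * of_bool q1 + of_bool q2) i)" for a' b' q0 q1 q2
    unfolding padp_def omegas_bcomp P_def ws_def ..
  show ?thesis
    unfolding C Pa CB PB sum_below3 wt3_def w_def
    by (cases p0; cases p1; cases p2; simp only: col0 col1 col2 col3 col4 col5 col6 col7;
        cases a; cases b; cases c;
        simp add: S3_def lessThan8 Lc_def Lab_def add_divide_distrib;
        simp add: numeral_2_eq_2 numeral_3_eq_3)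
qed

end
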